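(* Let $M$ be a $3$-connected simple matroid with $r(M)\ge 4$, and let $K=x_1,\dots,x_n,y_1,\dots,y_n$ ($n\ge3$) be a carambole of $M$ with filament $L=\{y_1,\dots,y_n\}$. Then $M/L$ is $3$-connected. In particular, every triangle of $M$ that meets $\{x_1,\dots,x_n,y_1,\dots,y_n\}$ is contained in $L$.
   Context: A line of $M$ is a rank-$2$ set. For $n\ge3$, a sequence $x_1,\dots,x_n,y_1,\dots,y_n$ of elements of $M$ is a carambole of $M$ if $L:=\{y_1,\dots,y_n\}$ is a line of $M$ with $n$ distinct elements such that $\mathrm{si}(M/L)$ (the simplification) is $3$-connected, and, for each $i$, $(L-y_i)\cup x_i$ is a cocircuit of $M$. $L$ is called the filament of the carambole. *)

theory Defs
  imports Main
begin

definition matroid :: "'a set \<Rightarrow> ('a set \<Rightarrow> bool) \<Rightarrow> bool" where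
  "matroid E indep \<longleftrightarrow> finite E \<and> indep {} \<and>
     (\<forall>X. indep X \<longrightarrow> X \<subseteq> E) \<and>
     (\<forall>X Y. indep X \<and> Y \<subseteq> X \<longrightarrow> indep Y) \<and>
     (\<forall>X Y. indep X \<and> indep Y \<and> card X < card Y \<longrightarrow> (\<exists>e \<in> Y - X. indep (insert e X)))"

definition rk :: "('a set \<Rightarrow> bool) \<Rightarrow> 'a set \<Rightarrow> nat" where
  "rk indep X = Max {card I | I. I \<subseteq> X \<and> indep I}"

definition circuit :: "'a set \<Rightarrow> ('a set \<Rightarrow> bool) \<Rightarrow> 'a set \<Rightarrow> bool" where
  "circuit E indep C \<longleftrightarrow> C \<subseteq> E \<and> \<not> indep C \<and> (\<forall>D. D \<subset> C \<longrightarrow> indep D)"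

text \<open>Cocircuit = circuit of the dual matroid: a minimal set D whose complement is not spanning.\<close>
definition cocircuit :: "'a set \<Rightarrow> ('a set \<Rightarrow> bool) \<Rightarrow> 'a set \<Rightarrow> bool" where
  "cocircuit E indep D \<longleftrightarrow> D \<subseteq> E \<and> rk indep (E - D) < rk indep E \<and>
     (\<forall>D'. D' \<subset> D \<longrightarrow> rk indep (E - D') = rk indep E)"

definition triangle :: "'a set \<Rightarrow> ('a set \<Rightarrow> bool) \<Rightarrow> 'a set \<Rightarrow> bool" where
  "triangle E indep T \<longleftrightarrow> circuit E indep T \<and> card T = 3"

definition line :: "'a set \<Rightarrow> ('a set \<Rightarrow> bool) \<Rightarrow> 'a set \<Rightarrow> bool" where
  "line E indep L \<longleftrightarrow> L \<subseteq> E \<and> rk indep L = 2"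

definition simple :: "'a set \<Rightarrow> ('a set \<Rightarrow> bool) \<Rightarrow> bool" where
  "simple E indep \<longleftrightarrow> (\<forall>X. X \<subseteq> E \<and> card X \<le> 2 \<longrightarrow> indep X)"

definition k_separation :: "'a set \<Rightarrow> ('a set \<Rightarrow> bool) \<Rightarrow> nat \<Rightarrow> 'a set \<Rightarrow> bool" where
  "k_separation E indep k X \<longleftrightarrow> X \<subseteq> E \<and> card X \<ge> k \<and> card (E - X) \<ge> k \<and>
     rk indep X + rk indep (E - X) < rk indep E + k"

definition three_connected :: "'a set \<Rightarrow> ('a set \<Rightarrow> bool) \<Rightarrow> bool" where
  "three_connected E indep \<longleftrightarrow> (\<forall>k X. 1 \<le> k \<and> k < 3 \<longrightarrow> \<not> k_separation E indep k X)"

definition contract_indep :: "'a set \<Rightarrow> ('a set \<Rightarrow> bool) \<Rightarrow> 'a set \<Rightarrow> 'a set \<Rightarrow> bool" where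
  "contract_indep E indep L X \<longleftrightarrow> X \<subseteq> E - L \<and> rk indep (X \<union> L) = card X + rk indep L"

definition restrict_indep :: "('a set \<Rightarrow> bool) \<Rightarrow> 'a set \<Rightarrow> 'a set \<Rightarrow> bool" where
  "restrict_indep indep S X \<longleftrightarrow> X \<subseteq> S \<and> indep X"

definition loop :: "'a set \<Rightarrow> ('a set \<Rightarrow> bool) \<Rightarrow> 'a \<Rightarrow> bool" where
  "loop E indep e \<longleftrightarrow> e \<in> E \<and> \<not> indep {e}"

definition par_eq :: "'a set \<Rightarrow> ('a set \<Rightarrow> bool) \<Rightarrow> 'a \<Rightarrow> 'a \<Rightarrow> bool" where
  "par_eq E indep e f \<longleftrightarrow> e \<in> E \<and> f \<in> E \<and> \<not> loop E indep e \<and> \<not> loop E indep f \<and>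
     rk indep {e, f} = 1"

definition simplification_set :: "'a set \<Rightarrow> ('a set \<Rightarrow> bool) \<Rightarrow> 'a set \<Rightarrow> bool" where
  "simplification_set E indep S \<longleftrightarrow> S \<subseteq> E \<and> (\<forall>s\<in>S. \<not> loop E indep s) \<and>
     (\<forall>e\<in>E. \<not> loop E indep e \<longrightarrow> (\<exists>!s. s \<in> S \<and> par_eq E indep e s))"

text \<open>si(M) is 3-connected (independent of the choice of simplification up to isomorphism).\<close>
definition si_three_connected :: "'a set \<Rightarrow> ('a set \<Rightarrow> bool) \<Rightarrow> bool" where
  "si_three_connected E indep \<longleftrightarrow>
     (\<exists>S. simplification_set E indep S \<and> three_connected S (restrict_indep indep S))"

definition carambole :: "'a set \<Rightarrow> ('a set \<Rightarrow> bool) \<Rightarrow> nat \<Rightarrow> (nat \<Rightarrow> 'a) \<Rightarrow> (nat \<Rightarrow> 'a) \<Rightarrow> bool" where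
  "carambole E indep n x y \<longleftrightarrow> n \<ge> 3 \<and>
     (\<forall>i\<in>{1..n}. x i \<in> E \<and> y i \<in> E) \<and>
     line E indep (y ` {1..n}) \<and> inj_on y {1..n} \<and>
     si_three_connected (E - y ` {1..n}) (contract_indep E indep (y ` {1..n})) \<and>
     (\<forall>i\<in>{1..n}. cocircuit E indep ((y ` {1..n} - {y i}) \<union> {x i}))"

end

theory Submission
  imports Defs
begin



lemma rkP_ge:
  assumes "finite X" "I \<subseteq> X" "P I"
  shows "card I \<le> rk P X"
proof -
  have fin: "finite {card I | I. I \<subseteq> X \<and> P I}"
    by (rule finite_subset[of _ "card ` Pow X"]) (auto simp: assms)
  show ?thesis unfolding rk_def using assms by (intro Max_ge[OF fin]) auto
qed

lemma rkP_le:
  assumes "finite X" "P {}"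
  shows "rk P X \<le> card X"
proof -
  have fin: "finite {card I | I. I \<subseteq> X \<and> P I}"
    by (rule finite_subset[of _ "card ` Pow X"]) (auto simp: assms)
  have "rk P X \<in> {card I | I. I \<subseteq> X \<and> P I}"
    unfolding rk_def using assms by (intro Max_in[OF fin]) auto
  then obtain I where I: "I \<subseteq> X" "rk P X = card I" by auto
  show ?thesis using card_mono[OF assms(1) I(1)] I(2) by simp
qed

locale mat =
  fixes E :: "'a set" and indep :: "'a set \<Rightarrow> bool"
  assumes M: "matroid E indep"
begin

abbreviation "r \<equiv> rk indep"

lemma MM: "finite E \<and> indep {} \<and>
     (\<forall>X. indep X \<longrightarrow> X \<subseteq> E) \<and>
     (\<forall>X Y. indep X \<and> Y \<subseteq> X \<longrightarrow> indep Y) \<and>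
     (\<forall>X Y. indep X \<and> indep Y \<and> card X < card Y \<longrightarrow> (\<exists>e \<in> Y - X. indep (insert e X)))"
  using M unfolding matroid_def .
lemma finE: "finite E" using MM by (elim conjE)
lemma indep_empty: "indep {}" using MM by (elim conjE)
lemma indep_sub: "indep X \<Longrightarrow> X \<subseteq> E" using MM by (elim conjE) simp
lemma indep_mono: "indep X \<Longrightarrow> Y \<subseteq> X \<Longrightarrow> indep Y" using MM by (elim conjE) simp
lemma augment: "indep X \<Longrightarrow> indep Y \<Longrightarrow> card X < card Y \<Longrightarrow> \<exists>e \<in> Y - X. indep (insert e X)"
  using MM by (elim conjE) simp

lemma rk_fin: "finite {card I | I. I \<subseteq> X \<and> indep I}"
proof -
  have "{card I | I. I \<subseteq> X \<and> indep I} \<subseteq> card ` Pow E" using indep_sub by auto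
  then show ?thesis using finite_subset finE by blast
qed

lemma rk_ge: "I \<subseteq> X \<Longrightarrow> indep I \<Longrightarrow> card I \<le> r X"
  unfolding rk_def by (intro Max_ge[OF rk_fin]) auto

lemma rk_wit: "\<exists>I. I \<subseteq> X \<and> indep I \<and> card I = r X"
proof -
  have "r X \<in> {card I | I. I \<subseteq> X \<and> indep I}"
    unfolding rk_def using indep_empty by (intro Max_in[OF rk_fin]) auto
  then show ?thesis by auto
qed

lemma rk_le_card: "finite X \<Longrightarrow> r X \<le> card X"
proof -
  assume f: "finite X"
  obtain I where I: "I \<subseteq> X" "indep I" "card I = r X" using rk_wit by blast
  show ?thesis using card_mono[OF f I(1)] I(3) by simp
qed

lemma rk_mono: "X \<subseteq> Y \<Longrightarrow> r X \<le> r Y"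
proof -
  assume a: "X \<subseteq> Y"
  obtain I where I: "I \<subseteq> X" "indep I" "card I = r X" using rk_wit by blast
  have "I \<subseteq> Y" using I a by blast
  then show ?thesis using rk_ge[of I Y] I by simp
qed

lemma fin_indep: "indep X \<Longrightarrow> finite X"
  using indep_sub finE finite_subset by blast

lemma rk_indep: "indep X \<Longrightarrow> r X = card X"
proof -
  assume a: "indep X"
  have "card X \<le> r X" using rk_ge[of X X] a by simp
  moreover have "r X \<le> card X" using rk_le_card fin_indep a by blast
  ultimately show ?thesis by simp
qed

lemma extend: "I \<subseteq> Z \<Longrightarrow> indep I \<Longrightarrow> \<exists>J. I \<subseteq> J \<and> J \<subseteq> Z \<and> indep J \<and> card J = r Z"
proof (induction "r Z - card I" arbitrary: I rule: less_induct)
  case less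
  have le: "card I \<le> r Z" using rk_ge less.prems by blast
  show ?case
  proof (cases "card I = r Z")
    case True then show ?thesis using less.prems by blast
  next
    case False
    obtain K where K: "K \<subseteq> Z" "indep K" "card K = r Z" using rk_wit by blast
    have "card I < card K" using K le False by simp
    then obtain e where e: "e \<in> K - I" "indep (insert e I)" using augment less.prems K by blast
    have finI: "finite I" using less.prems indep_sub finE finite_subset by blast
    have c: "card (insert e I) = card I + 1" using e finI by simp
    have "r Z - card (insert e I) < r Z - card I" using c le False by simp
    from less.hyps[OF this] obtain J where "insert e I \<subseteq> J" "J \<subseteq> Z" "indep J" "card J = r Z"
      using e K less.prems by blast
    then show ?thesis by blast
  qed
qed

lemma submod: "r (X \<union> Y) + r (X \<inter> Y) \<le> r X + r Y"
proof -
  obtain I where I: "I \<subseteq> X \<inter> Y" "indep I" "card I = r (X \<inter> Y)" using rk_wit by blast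
  obtain J where J: "I \<subseteq> J" "J \<subseteq> X \<union> Y" "indep J" "card J = r (X \<union> Y)"
    using extend[of I "X \<union> Y"] I by blast
  have finJ: "finite J" using fin_indep J(3) .
  have a: "card (J \<inter> X) \<le> r X" using rk_ge[of "J \<inter> X" X] indep_mono[OF J(3), of "J \<inter> X"] by simp
  have b: "card (J \<inter> Y) \<le> r Y" using rk_ge[of "J \<inter> Y" Y] indep_mono[OF J(3), of "J \<inter> Y"] by simp
  have c: "card (J \<inter> X) + card (J \<inter> Y) = card ((J \<inter> X) \<union> (J \<inter> Y)) + card ((J \<inter> X) \<inter> (J \<inter> Y))"
    using card_Un_Int[of "J \<inter> X" "J \<inter> Y"] finJ by simp
  have d: "(J \<inter> X) \<union> (J \<inter> Y) = J" using J by blast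
  have e: "card I \<le> card ((J \<inter> X) \<inter> (J \<inter> Y))"
    using I J finJ by (intro card_mono) auto
  have f: "card J + card I \<le> r X + r Y" using a b c d e by simp
  show ?thesis using f I(3) J(4) by simp
qed

lemma rk_insert: "r (insert z X) \<le> r X + 1"
proof -
  have "r (X \<union> {z}) + r (X \<inter> {z}) \<le> r X + r {z}" by (rule submod)
  moreover have "r {z} \<le> 1" using rk_le_card[of "{z}"] by simp
  ultimately show ?thesis by simp
qed

lemma closure: "Y \<subseteq> X \<Longrightarrow> z \<notin> X \<Longrightarrow> r (insert z Y) \<le> r Y \<Longrightarrow> r (insert z X) \<le> r X"
proof -
  assume a: "Y \<subseteq> X" "z \<notin> X" "r (insert z Y) \<le> r Y"
  have "r (X \<union> insert z Y) + r (X \<inter> insert z Y) \<le> r X + r (insert z Y)" by (rule submod)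
  moreover have "X \<union> insert z Y = insert z X" "X \<inter> insert z Y = Y" using a by auto
  ultimately show ?thesis using a by simp
qed

end



locale car = mat +
  fixes n :: nat and x y :: "nat \<Rightarrow> 'a"
  assumes tc: "three_connected E indep" and smp: "simple E indep" and r4: "rk indep E \<ge> 4"
    and ca: "carambole E indep n x y"
begin

abbreviation "L \<equiv> y ` {1..n}"
abbreviation "C i \<equiv> (L - {y i}) \<union> {x i}"

lemma n3: "n \<ge> 3" using ca unfolding carambole_def by blast
lemma xE: "i \<in> {1..n} \<Longrightarrow> x i \<in> E" using ca unfolding carambole_def by blast
lemma yE: "i \<in> {1..n} \<Longrightarrow> y i \<in> E" using ca unfolding carambole_def by blast
lemma LE: "L \<subseteq> E" using yE by blast
lemma rL: "r L = 2" using ca unfolding carambole_def line_def by blast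
lemma injy: "inj_on y {1..n}" using ca unfolding carambole_def by blast
lemma yne: "i \<in> {1..n} \<Longrightarrow> j \<in> {1..n} \<Longrightarrow> i \<noteq> j \<Longrightarrow> y i \<noteq> y j"
  using injy inj_on_eq_iff by metis
lemma cL: "card L = n" using card_image[OF injy] by simp
lemma finL: "finite L" by simp
lemma coc: "i \<in> {1..n} \<Longrightarrow> cocircuit E indep (C i)" using ca unfolding carambole_def by blast
lemma cocH: "i \<in> {1..n} \<Longrightarrow> r (E - C i) < r E" using coc unfolding cocircuit_def by blast
lemma cocP: "i \<in> {1..n} \<Longrightarrow> D \<subset> C i \<Longrightarrow> r (E - D) = r E" using coc unfolding cocircuit_def by blast

lemma pair_indep: "a \<in> E \<Longrightarrow> b \<in> E \<Longrightarrow> indep {a, b}"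
  using smp unfolding simple_def by (simp add: card_insert_if)
lemma rk_pair: "a \<in> E \<Longrightarrow> b \<in> E \<Longrightarrow> a \<noteq> b \<Longrightarrow> r {a, b} = 2"
  using rk_indep[OF pair_indep] by simp
lemma rk_single: "a \<in> E \<Longrightarrow> r {a} = 1"
  using rk_indep[OF pair_indep[of a a]] by simp

lemma other: "i \<in> {1..n} \<Longrightarrow> \<exists>j\<in>{1..n}. j \<noteq> i"
proof (cases "i = 1")
  case True then show ?thesis using n3 by (intro bexI[of _ 2]) auto
next
  case False then show ?thesis using n3 by (intro bexI[of _ 1]) auto
qed

lemma yL: "i \<in> {1..n} \<Longrightarrow> y i \<in> L" by blast

lemma sep:
  assumes X: "X \<subseteq> E" "2 \<le> card X" "r X \<le> 3" "r X + r (E - X) \<le> r E + 1"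
  shows False
proof -
  have finX: "finite (E - X)" using finE by simp
  consider "card (E - X) = 0" | "card (E - X) = 1" | "card (E - X) \<ge> 2" by linarith
  then show False
  proof cases
    case 1
    then have "E - X = {}" using finX by simp
    then have "X = E" using X by blast
    then show False using X r4 by simp
  next
    case 2
    then obtain g where g: "E - X = {g}" using card_1_singletonE by blast
    have gE: "g \<in> E" using g by blast
    have EX: "E - {g} = X" using g X by blast
    have "k_separation E indep 1 {g}"
      unfolding k_separation_def using gE EX X rk_single[OF gE] r4 by simp
    then show False using tc unfolding three_connected_def by auto
  next
    case 3
    have "k_separation E indep 2 X"
      unfolding k_separation_def using X 3 by simp
    then show False using tc unfolding three_connected_def by auto
  qed
qed

lemma xnotL: assumes i: "i \<in> {1..n}" shows "x i \<notin> L"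
proof
  assume xi: "x i \<in> L"
  have "E - L \<subseteq> E - C i" using xi by blast
  then have "r (E - L) < r E" using rk_mono cocH[OF i] by (meson le_less_trans)
  moreover have "2 \<le> card L" using cL n3 by simp
  ultimately show False using sep[of L] LE rL by simp
qed

lemma Ex: assumes i: "i \<in> {1..n}" shows "r (E - {x i}) = r E"
proof -
  obtain j where j: "j \<in> {1..n}" "j \<noteq> i" using other[OF i] by blast
  have yjL: "y j \<in> L" using yL[OF j(1)] .
  have "y j \<noteq> x i" using yjL xnotL[OF i] by metis
  moreover have "y j \<in> C i" using yjL yne[OF j(1) i j(2)] by blast
  ultimately have "{x i} \<subset> C i" by blast
  then show ?thesis using cocP[OF i] by blast
qed

lemma Hy: assumes i: "i \<in> {1..n}" and j: "j \<in> {1..n}" "j \<noteq> i"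
  shows "r (insert (y j) (E - C i)) = r E"
proof -
  have yj: "y j \<in> C i" using yne[OF j(1) i j(2)] j by auto
  then have "C i - {y j} \<subset> C i" by blast
  moreover have "insert (y j) (E - C i) = E - (C i - {y j})" using yj yE[OF j(1)] by blast
  ultimately show ?thesis using cocP[OF i] by simp
qed

lemma yH: assumes i: "i \<in> {1..n}" shows "y i \<in> E - C i"
  using xnotL[OF i] yE[OF i] yL[OF i] by auto

end


context car
begin

lemma one: "1 \<in> {1..n}" using n3 by simp
lemma two: "2 \<in> {1..n}" using n3 by simp
lemma three: "3 \<in> {1..n}" using n3 by simp

lemma A: assumes e: "e \<in> E" "e \<notin> L" shows "r (insert e L) = 3"
proof -
  have up: "r (insert e L) \<le> 3" using rk_insert[of e L] rL by simp
  have "\<not> r (insert e L) \<le> 2"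
  proof
    assume le2: "r (insert e L) \<le> 2"
    show False
    proof (cases "x 1 = e")
      case True
      have "E - insert e L \<subseteq> E - C 1" using True by auto
      then have a: "r (E - insert e L) < r E" using rk_mono cocH[OF one] by (meson le_less_trans)
      have "card L \<le> card (insert e L)" by (rule card_mono) auto
      then have b: "2 \<le> card (insert e L)" using cL n3 by simp
      show False using sep[of "insert e L"] a b le2 e LE by simp
    next
      case False
      have y1: "y 1 \<in> E - C 1" using yH[OF one] .
      have eH: "e \<in> E - C 1" using e False by auto
      have y2L: "y 2 \<in> L" using yL[OF two] .
      have y21: "y 2 \<noteq> y 1" using yne[OF two one] by simp
      have y2: "y 2 \<notin> E - C 1" using y2L y21 by auto
      have y1e: "y 1 \<noteq> e" using yL[OF one] e by metis
      have "r (insert (y 2) {y 1, e}) \<le> r (insert e L)"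
        by (rule rk_mono) (use y2L yL[OF one] in blast)
      also have "\<dots> \<le> r {y 1, e}" using le2 rk_pair[OF yE[OF one] e(1) y1e] by simp
      finally have cl: "r (insert (y 2) {y 1, e}) \<le> r {y 1, e}" .
      have sub: "{y 1, e} \<subseteq> E - C 1" using y1 eH by simp
      have "r (insert (y 2) (E - C 1)) \<le> r (E - C 1)"
        using closure[OF sub y2 cl] .
      then show False using Hy[OF one two] cocH[OF one] y21 by simp
    qed
  qed
  then show ?thesis using up by simp
qed

lemma K: assumes i: "i \<in> {1..n}" and j: "j \<in> {1..n}" and ij: "i \<noteq> j"
  shows "r (E - L - {x i, x j}) + 2 \<le> r E"
proof (rule ccontr)
  define B where "B = E - L - {x i, x j}"
  assume "\<not> r (E - L - {x i, x j}) + 2 \<le> r E"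
  then have rB: "r E \<le> r B + 1" unfolding B_def by simp
  have yij: "y i \<noteq> y j" using yne[OF i j ij] .
  have yiL: "y i \<in> L" using yL[OF i] .
  have yjL: "y j \<in> L" using yL[OF j] .
  have hi: "insert (y i) B \<subseteq> E - C i" unfolding B_def using yH[OF i] by auto
  have hj: "insert (y j) B \<subseteq> E - C j" unfolding B_def using yH[OF j] by auto
  have ri: "r (insert (y i) B) < r E" using rk_mono[OF hi] cocH[OF i] by simp
  have rj: "r (insert (y j) B) < r E" using rk_mono[OF hj] cocH[OF j] by simp
  have s1: "r (insert (y i) B \<union> insert (y j) B) + r (insert (y i) B \<inter> insert (y j) B)
      \<le> r (insert (y i) B) + r (insert (y j) B)" by (rule submod)
  have e1: "insert (y i) B \<inter> insert (y j) B = B" unfolding B_def using yij yiL yjL by auto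
  have e2: "insert (y i) B \<union> insert (y j) B = insert (y i) (insert (y j) B)" by auto
  have P: "r (insert (y i) (insert (y j) B)) + 1 \<le> r E" using s1 e1 e2 ri rj rB by simp
  have s2: "r (insert (y i) (insert (y j) B) \<union> L) + r (insert (y i) (insert (y j) B) \<inter> L)
      \<le> r (insert (y i) (insert (y j) B)) + r L" by (rule submod)
  have e3: "insert (y i) (insert (y j) B) \<inter> L = {y i, y j}" unfolding B_def using yiL yjL by auto
  have e4: "insert (y i) (insert (y j) B) \<union> L = B \<union> L" using yiL yjL by auto
  have BL: "r (B \<union> L) + 1 \<le> r E"
    using s2 e3 e4 P rL rk_pair[OF yE[OF i] yE[OF j] yij] by simp
  have xiL: "x i \<notin> L" using xnotL[OF i] .
  have xjL: "x j \<notin> L" using xnotL[OF j] .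
  show False
  proof (cases "x i = x j")
    case True
    have "E - {x i} = B \<union> L" unfolding B_def using True xiL LE by auto
    then show False using Ex[OF i] BL by simp
  next
    case False
    have H: "E - C i = insert (x j) (insert (y i) B)"
      unfolding B_def using False xjL xE[OF j] yE[OF i] xiL yiL by auto
    have s3: "r ((E - C i) \<union> (B \<union> L)) + r ((E - C i) \<inter> (B \<union> L)) \<le> r (E - C i) + r (B \<union> L)"
      by (rule submod)
    have e5: "(E - C i) \<union> (B \<union> L) = E - {x i}" unfolding B_def using LE xiL xE[OF j] False by auto
    have e6: "(E - C i) \<inter> (B \<union> L) = insert (y i) B" unfolding H B_def using xjL yiL by auto
    have "r B \<le> r (insert (y i) B)" by (rule rk_mono) blast
    then show False using s3 e5 e6 Ex[OF i] cocH[OF i] BL rB by simp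
  qed
qed

end


context car
begin

lemma B: assumes e: "e \<in> E" "e \<notin> L" and f: "f \<in> E" "f \<notin> L" and ef: "e \<noteq> f"
  shows "r (insert e (insert f L)) = 4"
proof -
  have up: "r (insert e (insert f L)) \<le> 4" using rk_insert[of e "insert f L"] A[OF f] by simp
  have "\<not> r (insert e (insert f L)) \<le> 3"
  proof
    assume le3: "r (insert e (insert f L)) \<le> 3"
    have c1: "r {e, f, y i} \<le> 2" if i: "i \<in> {1..n}" and xi: "x i \<noteq> e" "x i \<noteq> f" for i
    proof (rule ccontr)
      assume "\<not> r {e, f, y i} \<le> 2"
      then have ge: "3 \<le> r {e, f, y i}" by simp
      obtain j where j: "j \<in> {1..n}" "j \<noteq> i" using other[OF i] by auto
      have yjL: "y j \<in> L" using yL[OF j(1)] .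
      have yji: "y j \<noteq> y i" using yne[OF j(1) i j(2)] .
      have sub: "{e, f, y i} \<subseteq> E - C i" using e f xi yH[OF i] by auto
      have yj: "y j \<notin> E - C i" using yjL yji by auto
      have "r (insert (y j) {e, f, y i}) \<le> r (insert e (insert f L))"
        by (rule rk_mono) (use yjL yL[OF i] in auto)
      then have cl: "r (insert (y j) {e, f, y i}) \<le> r {e, f, y i}" using le3 ge by simp
      have "r (insert (y j) (E - C i)) \<le> r (E - C i)" using closure[OF sub yj cl] .
      then show False using Hy[OF i j(1) j(2)] cocH[OF i] by simp
    qed
    have c2: False if i: "i \<in> {1..n}" and j: "j \<in> {1..n}" and ij: "i \<noteq> j"
      and xi: "x i \<noteq> e" "x i \<noteq> f" and xj: "x j \<noteq> e" "x j \<noteq> f" for i j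
    proof -
      have yij: "y i \<noteq> y j" using yne[OF i j ij] .
      have yiL: "y i \<in> L" using yL[OF i] .
      have yjL: "y j \<in> L" using yL[OF j] .
      have s: "r ({e, f, y i} \<union> {e, f, y j}) + r ({e, f, y i} \<inter> {e, f, y j}) \<le> r {e, f, y i} + r {e, f, y j}"
        by (rule submod)
      have i1: "{e, f, y i} \<inter> {e, f, y j} = {e, f}" using yij yiL yjL e f by auto
      have u1: "{e, f, y i} \<union> {e, f, y j} = {e, f, y i, y j}" by auto
      have "r {e, f, y i, y j} \<le> 2" using s i1 u1 c1[OF i xi] c1[OF j xj] rk_pair[OF e(1) f(1) ef] by simp
      moreover have "r (insert e {y i, y j}) \<le> r {e, f, y i, y j}" by (rule rk_mono) auto
      ultimately have cl: "r (insert e {y i, y j}) \<le> r {y i, y j}"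
        using rk_pair[OF yE[OF i] yE[OF j] yij] by simp
      have sub: "{y i, y j} \<subseteq> L" using yiL yjL by auto
      have "r (insert e L) \<le> r L" using closure[OF sub e(2) cl] .
      then show False using A[OF e] rL by simp
    qed
    have good: "x i \<in> {e, f}" if "i \<in> {1..n}" "k \<in> {1..n}" "i \<noteq> k" "x k \<notin> {e, f}" for i k
      using c2[of i k] that by auto
    obtain i j where ij: "i \<in> {1..n}" "j \<in> {1..n}" "i \<noteq> j" "x i \<in> {e, f}" "x j \<in> {e, f}"
    proof (cases "x 1 \<in> {e, f}")
      case True
      note T = True
      show ?thesis
      proof (cases "x 2 \<in> {e, f}")
        case True then show ?thesis using that[of 1 2] T one two by simp
      next
        case False then show ?thesis using that[of 1 3] T one three good[OF three two] by simp
      qed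
    next
      case False then show ?thesis using that[of 2 3] two three good[OF two one] good[OF three one] by simp
    qed
    have sub: "E - insert e (insert f L) \<subseteq> E - L - {x i, x j}" using ij by auto
    have "r (E - insert e (insert f L)) + 2 \<le> r E" using rk_mono[OF sub] K[OF ij(1,2,3)] by simp
    moreover have "card L \<le> card (insert e (insert f L))" by (rule card_mono) auto
    ultimately show False using sep[of "insert e (insert f L)"] le3 cL n3 e f LE by simp
  qed
  then show ?thesis using up by simp
qed

end


context car
begin

lemma tri_basic: assumes T: "triangle E indep T"
  shows "T \<subseteq> E" "card T = 3" "finite T" "r T \<le> 2" "\<And>U. U \<subset> T \<Longrightarrow> indep U"
proof -
  show TE: "T \<subseteq> E" and cT: "card T = 3" and U: "\<And>U. U \<subset> T \<Longrightarrow> indep U"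
    using T unfolding triangle_def circuit_def by auto
  show finT: "finite T" using TE finE finite_subset by auto
  have ni: "\<not> indep T" using T unfolding triangle_def circuit_def by auto
  obtain I where I: "I \<subseteq> T" "indep I" "card I = r T" using rk_wit by auto
  have "r T \<le> 3" using rk_le_card[OF finT] cT by simp
  moreover have "r T \<noteq> 3"
  proof
    assume "r T = 3"
    then have "I = T" using card_subset_eq[OF finT I(1)] I cT by simp
    then show False using I ni by simp
  qed
  ultimately show "r T \<le> 2" by simp
qed

lemma tri: assumes T: "triangle E indep T" and m: "T \<inter> (x ` {1..n} \<union> L) \<noteq> {}"
  shows "T \<subseteq> L"
proof (rule ccontr)
  assume "\<not> T \<subseteq> L"
  then obtain e where eT: "e \<in> T" "e \<notin> L" by auto
  note tb = tri_basic[OF T]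
  show False
  proof (cases "T \<inter> L = {}")
    case True
    have "T \<inter> x ` {1..n} \<noteq> {}" using m True by auto
    then obtain z where "z \<in> T" "z \<in> x ` {1..n}" by blast
    then obtain i where i: "i \<in> {1..n}" "x i \<in> T" by (metis imageE)
    have xiL: "x i \<notin> L" using xnotL[OF i(1)] .
    have sub: "T - {x i} \<subseteq> E - C i" using True tb(1) by auto
    have xn: "x i \<notin> E - C i" by auto
    have "T - {x i} \<subset> T" using i by auto
    then have ind: "indep (T - {x i})" using tb(5) by simp
    have "card (T - {x i}) = 2" using tb(2,3) i by simp
    then have r2: "r (T - {x i}) = 2" using rk_indep[OF ind] by simp
    have "insert (x i) (T - {x i}) = T" using i by auto
    then have cl: "r (insert (x i) (T - {x i})) \<le> r (T - {x i})" using r2 tb(4) by simp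
    have a: "r (insert (x i) (E - C i)) \<le> r (E - C i)" using closure[OF sub xn cl] .
    have yj: "\<exists>j\<in>{1..n}. j \<noteq> i" using other[OF i(1)] .
    then obtain j where j: "j \<in> {1..n}" "j \<noteq> i" by auto
    have "y j \<in> C i" "y j \<noteq> x i" using yL[OF j(1)] yne[OF j(1) i(1) j(2)] xiL by auto
    then have ps: "C i - {x i} \<subset> C i" by auto
    have "insert (x i) (E - C i) = E - (C i - {x i})" using xE[OF i(1)] by auto
    then have "r (insert (x i) (E - C i)) = r E" using cocP[OF i(1) ps] by simp
    then show False using a cocH[OF i(1)] by simp
  next
    case False
    have ps: "T \<inter> L \<subset> T" using eT by auto
    then have ind: "indep (T \<inter> L)" using tb(5) by simp
    have rI: "r (T \<inter> L) = card (T \<inter> L)" using rk_indep[OF ind] .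
    have c1: "card (T \<inter> L) \<ge> 1" using False tb(3) by (simp add: card_gt_0_iff Suc_le_eq)
    have s: "r (T \<union> L) + r (T \<inter> L) \<le> r T + r L" by (rule submod)
    have dec: "card T = card (T \<inter> L) + card (T - L)"
    proof -
      have "T \<inter> L \<inter> (T - L) = {}" by auto
      moreover have "T \<inter> L \<union> (T - L) = T" by auto
      ultimately show ?thesis using card_Un_disjoint[of "T \<inter> L" "T - L"] tb(3) by simp
    qed
    show False
    proof (cases "card (T \<inter> L) \<ge> 2")
      case True
      have "r (T \<union> L) \<le> 2" using s rI True tb(4) rL by simp
      moreover have "r (insert e L) \<le> r (T \<union> L)" by (rule rk_mono) (use eT in auto)
      ultimately show False using A[of e] eT tb(1) by auto
    next
      case False
      then have "card (T \<inter> L) = 1" using c1 by simp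
      then have c2: "card (T - L) = 2" using dec tb(2) by simp
      then obtain a b where ab: "T - L = {a, b}" "a \<noteq> b" by (meson card_2_iff)
      have "r (T \<union> L) \<le> 3" using s rI \<open>card (T \<inter> L) = 1\<close> tb(4) rL by simp
      moreover have "r (insert a (insert b L)) \<le> r (T \<union> L)" by (rule rk_mono) (use ab in auto)
      moreover have "a \<in> E" "b \<in> E" "a \<notin> L" "b \<notin> L" using ab tb(1) by auto
      ultimately show False using B[of a b] ab by simp
    qed
  qed
qed

abbreviation "CI \<equiv> contract_indep E indep L"

lemma CI1: "e \<in> E - L \<Longrightarrow> CI {e}"
  unfolding contract_indep_def using A[of e] rL by simp

lemma CI2: "e \<in> E - L \<Longrightarrow> f \<in> E - L \<Longrightarrow> e \<noteq> f \<Longrightarrow> CI {e, f}"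
  unfolding contract_indep_def using B[of e f] rL by simp

lemma contr3: "three_connected (E - L) CI"
proof -
  obtain S where S: "simplification_set (E - L) CI S" "three_connected S (restrict_indep CI S)"
    using ca unfolding carambole_def si_three_connected_def by auto
  have "E - L \<subseteq> S"
  proof
    fix e assume e: "e \<in> E - L"
    have "\<not> loop (E - L) CI e" unfolding loop_def using CI1[OF e] by simp
    then obtain s where s: "s \<in> S" "par_eq (E - L) CI e s"
      using S(1) e unfolding simplification_set_def by blast
    have "s = e"
    proof (rule ccontr)
      assume ne: "s \<noteq> e"
      have sE: "s \<in> E - L" using s(2) unfolding par_eq_def by simp
      have "card {e, s} \<le> rk CI {e, s}" by (rule rkP_ge) (use CI2[OF e sE] ne in auto)
      then show False using s(2) ne unfolding par_eq_def by simp
    qed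
    then show "e \<in> S" using s by simp
  qed
  moreover have "S \<subseteq> E - L" using S(1) unfolding simplification_set_def by simp
  ultimately have SE: "S = E - L" by auto
  have "restrict_indep CI S = CI"
    unfolding SE by (rule ext) (auto simp: restrict_indep_def contract_indep_def)
  then show ?thesis using S(2) SE by simp
qed

end

theorem corollary4p3:
  fixes E :: "'a set" and indep :: "'a set \<Rightarrow> bool"
    and n :: nat and x y :: "nat \<Rightarrow> 'a"
  assumes "matroid E indep"
    and "three_connected E indep"
    and "simple E indep"
    and "rk indep E \<ge> 4"
    and "carambole E indep n x y"
  shows "three_connected (E - y ` {1..n}) (contract_indep E indep (y ` {1..n}))
     \<and> (\<forall>T. triangle E indep T \<and> T \<inter> (x ` {1..n} \<union> y ` {1..n}) \<noteq> {} \<longrightarrow> T \<subseteq> y ` {1..n})"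
proof -
  interpret car E indep n x y
    using assms unfolding car_def car_axioms_def mat_def by simp
  show ?thesis using contr3 tri by blast
qed


end
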